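(* Let $\lambda$ be a normalized additively alternating $n\times n$ complex matrix of rank $n-1$ with biresidue matrix $b$. Then a relevant weight $\mathbf w\in\mathbb{Z}^n$ is $\lambda$-Poisson-contributing if and only if $\mathbf w$ is a (complex) linear combination of the rows $b_{i\bullet}$ for those $i$ with $w_i=-1$. If, in addition, $\lambda$ is generic, this is equivalent to $\mathbf w$ being $q$-Hochschild-contributing for $q=\operatorname{EExp}(\lambda)$.
   Context: Additively alternating: $\lambda_{ij}=-\lambda_{ji}$; normalized: every row sums to $0$. The biresidue matrix of such $\lambda$ of rank $n-1$ is the unique normalized alternating matrix $b$ with $b|_\Delta=(\lambda|_\Delta)^{-1}$, where $\Delta=\{z\in\mathbb{C}^n:\sum_iz_i=0\}$ (which $\lambda$ maps to itself). $\operatorname{EExp}(\lambda)=(e^{\lambda_{ij}})$. A weight $\mathbf w$ is relevant if $w_i\ge-1$ for all $i$ and $\sum w_i=0$; $\lambda$-Poisson-contributing if $w_i\ge-1$ for all $i$ and $\sum_j\lambda_{ij}w_j=0$ for every $i$ with $w_i\ge0$; $q$-Hochschild-contributing if $w_i\ge-1$ for all $i$ and $\prod_jq_{ij}^{w_j}=1$ for every $i$ with $w_i\ge0$. $\lambda$ is generic if it has rank $n-1$ and every relevant $\operatorname{EExp}(\lambda)$-Hochschild-contributing weight is $\lambda$-Poisson-contributing. *)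

theory Defs
  imports "HOL-Analysis.Analysis"
begin

definition add_alternating :: "complex^'n^'n \<Rightarrow> bool" where
  "add_alternating L \<longleftrightarrow> (\<forall>i j. L$i$j = - L$j$i)"

definition normalized :: "complex^'n^'n \<Rightarrow> bool" where
  "normalized L \<longleftrightarrow> (\<forall>i. (\<Sum>j\<in>UNIV. L$i$j) = 0)"

definition Delta :: "(complex^'n) set" where
  "Delta = {z. (\<Sum>i\<in>UNIV. z$i) = 0}"

definition biresidue :: "complex^'n^'n \<Rightarrow> complex^'n^'n \<Rightarrow> bool" where
  "biresidue L b \<longleftrightarrow> normalized b \<and> add_alternating b \<and>
     (\<forall>z\<in>Delta. b *v (L *v z) = z \<and> L *v (b *v z) = z)"

definition EExp :: "complex^'n^'n \<Rightarrow> complex^'n^'n" where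
  "EExp L = (\<chi> i j. exp (L$i$j))"

definition relevant :: "('n::finite \<Rightarrow> int) \<Rightarrow> bool" where
  "relevant w \<longleftrightarrow> (\<forall>i. w i \<ge> -1) \<and> (\<Sum>i\<in>UNIV. w i) = 0"

definition poisson_contributing :: "complex^'n^'n \<Rightarrow> ('n \<Rightarrow> int) \<Rightarrow> bool" where
  "poisson_contributing L w \<longleftrightarrow> (\<forall>i. w i \<ge> -1) \<and>
     (\<forall>i. w i \<ge> 0 \<longrightarrow> (\<Sum>j\<in>UNIV. L$i$j * of_int (w j)) = 0)"

definition hochschild_contributing :: "complex^'n^'n \<Rightarrow> ('n \<Rightarrow> int) \<Rightarrow> bool" where
  "hochschild_contributing q w \<longleftrightarrow> (\<forall>i. w i \<ge> -1) \<and>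
     (\<forall>i. w i \<ge> 0 \<longrightarrow> (\<Prod>j\<in>UNIV. (q$i$j) powi (w j)) = 1)"

definition generic :: "complex^'n^'n \<Rightarrow> bool" where
  "generic L \<longleftrightarrow> rank L = CARD('n) - 1 \<and>
     (\<forall>w. relevant w \<and> hochschild_contributing (EExp L) w \<longrightarrow> poisson_contributing L w)"

end

theory Submission
  imports Defs
begin

lemma mv_comp: "(A *v x) $ i = (\<Sum>j\<in>UNIV. A$i$j * x$j)"
  by (simp add: matrix_vector_mult_def)

lemma exp_powi: "exp (z::complex) powi k = exp (of_int k * z)"
proof (cases "k \<ge> 0")
  case True
  then obtain m where "k = int m" by (metis nonneg_eq_int)
  then show ?thesis by (simp add: exp_of_nat_mult)
next
  case False
  define m where "m = nat (-k)"
  have m: "k = - int m" using False by (simp add: m_def)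
  have "exp z powi k = inverse (exp z ^ m)" by (simp add: m power_int_minus)
  also have "\<dots> = inverse (exp (of_nat m * z))" by (simp add: exp_of_nat_mult)
  also have "\<dots> = exp (of_int k * z)" by (simp add: m exp_minus)
  finally show ?thesis .
qed

lemma alt_quad:
  assumes "add_alternating (b::complex^'n^'n)"
  shows "(\<Sum>k\<in>UNIV. \<Sum>j\<in>UNIV. x k * b$k$j * x j) = 0"
proof -
  let ?s = "(\<Sum>k\<in>UNIV. \<Sum>j\<in>UNIV. x k * b$k$j * x j)"
  have "?s = (\<Sum>j\<in>UNIV. \<Sum>k\<in>UNIV. x k * b$k$j * x j)" by (rule sum.swap)
  also have "\<dots> = (\<Sum>j\<in>UNIV. \<Sum>k\<in>UNIV. - (x j * b$j$k * x k))"
  proof (intro sum.cong refl)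
    fix j k
    have "b$k$j = - b$j$k" using assms unfolding add_alternating_def by blast
    then show "x k * b$k$j * x j = - (x j * b$j$k * x k)" by (simp add: algebra_simps)
  qed
  also have "\<dots> = - ?s" by (simp add: sum_negf)
  finally show ?thesis by simp
qed

theorem proposition4p9:
  fixes L b :: "complex^'n^'n" and w :: "'n \<Rightarrow> int"
  assumes "normalized L" and "add_alternating L" and "rank L = CARD('n) - 1"
    and "biresidue L b"
    and "relevant w"
  shows "(poisson_contributing L w \<longleftrightarrow>
           (\<exists>c :: 'n \<Rightarrow> complex. \<forall>j. of_int (w j) = (\<Sum>i\<in>{i. w i = -1}. c i * b$i$j)))
       \<and> (generic L \<longrightarrow>
           (poisson_contributing L w \<longleftrightarrow> hochschild_contributing (EExp L) w))"
proof -
  define S where "S = {i. w i = -1}"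
  define wv :: "complex^'n" where "wv = (\<chi> j. of_int (w j))"
  have ge: "\<And>i. w i \<ge> -1" using assms(5) unfolding relevant_def by blast
  have alt: "\<And>i j. b$i$j = - b$j$i" using assms(4) unfolding biresidue_def add_alternating_def by blast
  have inv: "\<And>z. z \<in> Delta \<Longrightarrow> b *v (L *v z) = z \<and> L *v (b *v z) = z"
    using assms(4) unfolding biresidue_def by blast
  have wD: "wv \<in> Delta" using assms(5) unfolding relevant_def Delta_def wv_def
    by (simp flip: of_int_sum)
  have P1: "poisson_contributing L w \<longleftrightarrow>
           (\<exists>c :: 'n \<Rightarrow> complex. \<forall>j. of_int (w j) = (\<Sum>i\<in>S. c i * b$i$j))"
  proof
    assume P: "poisson_contributing L w"
    define y where "y = L *v wv"
    have y0: "\<And>k. k \<notin> S \<Longrightarrow> y$k = 0"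
    proof -
      fix k assume "k \<notin> S"
      then have "w k \<ge> 0" using ge[of k] unfolding S_def by fastforce
      then show "y$k = 0" using P unfolding poisson_contributing_def y_def mv_comp wv_def by simp
    qed
    show "\<exists>c :: 'n \<Rightarrow> complex. \<forall>j. of_int (w j) = (\<Sum>i\<in>S. c i * b$i$j)"
    proof (intro exI allI)
      fix j
      have "of_int (w j) = (b *v y) $ j" using inv[OF wD] unfolding y_def wv_def by simp
      also have "\<dots> = (\<Sum>k\<in>UNIV. b$j$k * y$k)" by (rule mv_comp)
      also have "\<dots> = (\<Sum>k\<in>S. b$j$k * y$k)"
        by (rule sum.mono_neutral_right) (auto simp: y0)
      also have "\<dots> = (\<Sum>k\<in>S. (- y$k) * b$k$j)"
        by (intro sum.cong refl) (simp add: alt[of j])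
      finally show "of_int (w j) = (\<Sum>k\<in>S. (- y$k) * b$k$j)" .
    qed
  next
    assume "\<exists>c :: 'n \<Rightarrow> complex. \<forall>j. of_int (w j) = (\<Sum>i\<in>S. c i * b$i$j)"
    then obtain c where c: "\<And>j. of_int (w j) = (\<Sum>i\<in>S. c i * b$i$j)" by blast
    define c' :: "complex^'n" where "c' = (\<chi> k. if k \<in> S then c k else 0)"
    have wc: "\<And>j. of_int (w j) = (\<Sum>k\<in>UNIV. c'$k * b$k$j)"
    proof -
      fix j
      have "(\<Sum>k\<in>UNIV. c'$k * b$k$j) = (\<Sum>k\<in>S. c'$k * b$k$j)"
        by (rule sum.mono_neutral_right) (auto simp: c'_def)
      also have "\<dots> = (\<Sum>k\<in>S. c k * b$k$j)" by (simp add: c'_def)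
      finally show "of_int (w j) = (\<Sum>k\<in>UNIV. c'$k * b$k$j)" using c[of j] by simp
    qed
    have wv: "wv = - (b *v c')"
    proof (rule vec_eq_iff[THEN iffD2], rule allI)
      fix j
      have "wv$j = (\<Sum>k\<in>UNIV. c'$k * b$k$j)" using wc[of j] by (simp add: wv_def)
      also have "\<dots> = - (\<Sum>k\<in>UNIV. b$j$k * c'$k)"
        by (simp add: alt[of _ j] sum_negf[symmetric] mult.commute)
      finally show "wv$j = (- (b *v c'))$j" by (simp add: mv_comp)
    qed
    have "(\<Sum>k\<in>UNIV. c'$k * wv$k) = - (\<Sum>k\<in>UNIV. \<Sum>j\<in>UNIV. c'$k * b$k$j * c'$j)"
    proof -
      have "(\<Sum>k\<in>UNIV. c'$k * wv$k) = (\<Sum>k\<in>UNIV. c'$k * (\<Sum>j\<in>UNIV. c'$j * b$j$k))"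
        using wc by (simp add: wv_def)
      also have "\<dots> = (\<Sum>k\<in>UNIV. \<Sum>j\<in>UNIV. c'$j * b$j$k * c'$k)"
        by (simp add: sum_distrib_left mult.commute mult.left_commute)
      also have "\<dots> = (\<Sum>j\<in>UNIV. \<Sum>k\<in>UNIV. c'$j * b$j$k * c'$k)" by (rule sum.swap)
      also have "\<dots> = - (\<Sum>k\<in>UNIV. \<Sum>j\<in>UNIV. c'$k * b$k$j * c'$j)"
      proof -
        have "(\<Sum>k\<in>UNIV. \<Sum>j\<in>UNIV. c'$k * b$k$j * c'$j) = 0"
          using alt_quad[of b "\<lambda>k. c'$k"] assms(4) unfolding biresidue_def by blast
        moreover have "(\<Sum>j\<in>UNIV. \<Sum>k\<in>UNIV. c'$j * b$j$k * c'$k) = 0"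
          using alt_quad[of b "\<lambda>k. c'$k"] assms(4) unfolding biresidue_def by blast
        ultimately show ?thesis by simp
      qed
      finally show ?thesis .
    qed
    moreover have "(\<Sum>k\<in>UNIV. \<Sum>j\<in>UNIV. c'$k * b$k$j * c'$j) = 0"
      using alt_quad[of b "\<lambda>k. c'$k"] assms(4) unfolding biresidue_def by blast
    moreover have "(\<Sum>k\<in>UNIV. c'$k * wv$k) = - (\<Sum>k\<in>UNIV. c'$k)"
    proof -
      have "(\<Sum>k\<in>UNIV. c'$k * wv$k) = (\<Sum>k\<in>UNIV. - c'$k)"
        by (intro sum.cong refl) (simp add: c'_def wv_def S_def)
      then show ?thesis by (simp add: sum_negf)
    qed
    ultimately have "(\<Sum>k\<in>UNIV. c'$k) = 0" by simp
    then have cD: "c' \<in> Delta" by (simp add: Delta_def)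
    have Lw: "L *v wv = - c'"
    proof -
      have "\<And>x. L *v (- x) = - (L *v x)"
        by (simp add: vec_eq_iff mv_comp sum_negf[symmetric])
      then show ?thesis using inv[OF cD] wv by simp
    qed
    show "poisson_contributing L w"
      unfolding poisson_contributing_def
    proof (intro conjI allI impI)
      fix i show "w i \<ge> -1" by (rule ge)
    next
      fix i assume "0 \<le> w i"
      then have "i \<notin> S" by (simp add: S_def)
      have "(L *v wv)$i = 0" using Lw \<open>i \<notin> S\<close> by (simp add: c'_def)
      then show "(\<Sum>j\<in>UNIV. L$i$j * of_int (w j)) = 0" by (simp add: mv_comp wv_def)
    qed
  qed
  have P2: "generic L \<longrightarrow> (poisson_contributing L w \<longleftrightarrow> hochschild_contributing (EExp L) w)"
  proof (intro impI iffI)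
    assume "generic L" "hochschild_contributing (EExp L) w"
    then show "poisson_contributing L w" using assms(5) unfolding generic_def by blast
  next
    assume P: "poisson_contributing L w"
    show "hochschild_contributing (EExp L) w"
      unfolding hochschild_contributing_def
    proof (intro conjI allI impI)
      fix i show "w i \<ge> -1" by (rule ge)
    next
      fix i assume "0 \<le> w i"
      then have s: "(\<Sum>j\<in>UNIV. L$i$j * of_int (w j)) = 0" using P unfolding poisson_contributing_def by blast
      have "(\<Prod>j\<in>UNIV. (EExp L$i$j) powi (w j)) = (\<Prod>j\<in>UNIV. exp (of_int (w j) * L$i$j))"
        by (simp add: EExp_def exp_powi)
      also have "\<dots> = exp (\<Sum>j\<in>UNIV. of_int (w j) * L$i$j)" by (simp add: exp_sum)
      also have "\<dots> = 1" using s by (simp add: mult.commute)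
      finally show "(\<Prod>j\<in>UNIV. (EExp L$i$j) powi (w j)) = 1" .
    qed
  qed
  show ?thesis using P1 P2 unfolding S_def by blast
qed

end
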